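(* For all integers $k,n\ge 1$, in the algebra $\mathfrak{H}=\mathbb{Q}\langle x,y\rangle$, $$S(z_{k+1}z_1^{\,n})=\sum_{t=1}^{n+1}\ \sum_{\substack{a_1+a_2+\dots+a_t=n+1-t\\ a_i\ge 0,\ i=1,\dots,t}} z_{a_t+k+1}\,z_{a_1+1}\,z_{a_2+1}\cdots z_{a_{t-1}+1}.$$
   Context: $\mathfrak{H}=\mathbb{Q}\langle x,y\rangle$ is the algebra of noncommutative polynomials in letters $x,y$ over $\mathbb{Q}$; $A^*$ denotes the set of words in $x,y$ including the empty word $1$. For a positive integer $k$, $z_k=x^{k-1}y$. Let $\sigma$ be the algebra automorphism of $\mathfrak{H}$ with $\sigma(x)=x$, $\sigma(y)=x+y$. The $\mathbb{Q}$-linear map $S:\mathfrak{H}\to\mathfrak{H}$ is defined by $S(1)=1$ and $S(wa)=\sigma(w)a$ for every word $w\in A^*$ and letter $a\in\{x,y\}$. For $t=1$ the word on the right is just $z_{a_1+k+1}$. *)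

theory Defs
  imports Complex_Main "HOL-Library.Poly_Mapping"
begin

datatype letter = LX | LY

datatype word = Word "letter list"

fun word_list :: "word \<Rightarrow> letter list" where
  "word_list (Word w) = w"

instantiation word :: monoid_add
begin
definition zero_word :: word where "zero_word = Word []"
definition plus_word :: "word \<Rightarrow> word \<Rightarrow> word" where
  "plus_word u v = Word (word_list u @ word_list v)"
instance
proof
  fix a b c :: word
  show "a + b + c = a + (b + c)" by (cases a; cases b; cases c) (simp add: plus_word_def)
  show "0 + a = a" by (cases a) (simp add: plus_word_def zero_word_def)
  show "a + 0 = a" by (cases a) (simp add: plus_word_def zero_word_def)
qed
end

text \<open>The algebra H = Q<x,y> of noncommutative polynomials: finitely supported
  rational coefficient functions on words, with convolution (concatenation) product.\<close>
type_synonym hpoly = "word \<Rightarrow>\<^sub>0 rat"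

definition hword :: "letter list \<Rightarrow> hpoly" where
  "hword w = Poly_Mapping.single (Word w) 1"

definition xH :: hpoly where "xH = hword [LX]"
definition yH :: hpoly where "yH = hword [LY]"

fun letterH :: "letter \<Rightarrow> hpoly" where
  "letterH LX = xH"
| "letterH LY = yH"

definition zH :: "nat \<Rightarrow> hpoly" where
  "zH k = hword (replicate (k - 1) LX @ [LY])"

definition lin_ext :: "(letter list \<Rightarrow> hpoly) \<Rightarrow> hpoly \<Rightarrow> hpoly" where
  "lin_ext f p = (\<Sum>w\<in>Poly_Mapping.keys p. Poly_Mapping.single 0 (Poly_Mapping.lookup p w) * f (word_list w))"

fun sigma_letter :: "letter \<Rightarrow> hpoly" where
  "sigma_letter LX = xH"
| "sigma_letter LY = xH + yH"

definition sigma_word :: "letter list \<Rightarrow> hpoly" where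
  "sigma_word w = prod_list (map sigma_letter w)"

definition sigma :: "hpoly \<Rightarrow> hpoly" where
  "sigma = lin_ext sigma_word"

definition S_word :: "letter list \<Rightarrow> hpoly" where
  "S_word w = (if w = [] then 1 else sigma_word (butlast w) * letterH (last w))"

definition S :: "hpoly \<Rightarrow> hpoly" where
  "S = lin_ext S_word"

end

theory Submission
  imports Defs
begin

lemma hword_mult: "hword u * hword v = hword (u @ v)"
  by (simp add: hword_def mult_single plus_word_def)

lemma hword_nil: "hword [] = 1"
  by (simp add: hword_def zero_word_def[symmetric])

lemma lin_ext_hword: "lin_ext f (hword w) = f w"
  by (simp add: lin_ext_def hword_def)

definition zprod :: "nat list \<Rightarrow> hpoly" where
  "zprod c = prod_list (map (\<lambda>i. zH (i + 1)) c)"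

definition C :: "nat \<Rightarrow> nat list set" where
  "C m = {c. c \<noteq> [] \<and> sum_list c + length c = m + 1}"

lemma finite_C: "finite (C m)"
proof -
  have "C m \<subseteq> {c. set c \<subseteq> {..m} \<and> length c \<le> m + 1}"
  proof
    fix c assume "c \<in> C m"
    then have c: "c \<noteq> []" "sum_list c + length c = m + 1" unfolding C_def by auto
    then have "length c \<ge> 1" by (cases c) auto
    then have "\<forall>x\<in>set c. x \<le> m" using c member_le_sum_list[of _ c] by fastforce
    then show "c \<in> {c. set c \<subseteq> {..m} \<and> length c \<le> m + 1}" using c by auto
  qed
  moreover have "finite {c. set c \<subseteq> {..m} \<and> length c \<le> m + 1}"
    by (rule finite_lists_length_le) simp
  ultimately show ?thesis by (rule finite_subset)
qed

lemma x_zH: "xH * zH (i + 1) = zH (i + 2)"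
  by (simp add: xH_def zH_def hword_mult)

lemma xpow_zH: "xH ^ k * zH (i + 1) = zH (i + k + 1)"
proof (induction k arbitrary: i)
  case 0 then show ?case by simp
next
  case (Suc k)
  have "xH ^ Suc k * zH (i + 1) = xH * (xH ^ k * zH (i + 1))"
    by (simp add: mult.assoc)
  also have "\<dots> = xH * zH ((i + k) + 1)" using Suc by simp
  also have "\<dots> = zH (i + Suc k + 1)" using x_zH[of "i+k"] by simp
  finally show ?case .
qed

lemma y_z1: "yH = zH 1"
  by (simp add: yH_def zH_def)

lemma zprod_cons: "zprod (i # c) = zH (i + 1) * zprod c"
  by (simp add: zprod_def)

lemma C_Suc: "C (Suc m) = (\<lambda>c. Suc (hd c) # tl c) ` C m \<union> (\<lambda>c. 0 # c) ` C m"
proof (intro equalityI subsetI)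
  fix c assume c: "c \<in> C (Suc m)"
  then obtain h r where cr: "c = h # r" unfolding C_def by (cases c) auto
  show "c \<in> (\<lambda>c. Suc (hd c) # tl c) ` C m \<union> (\<lambda>c. 0 # c) ` C m"
  proof (cases h)
    case 0
    with c cr have "r \<in> C m" unfolding C_def by (cases r) auto
    then show ?thesis using cr 0 by auto
  next
    case (Suc h')
    with c cr have "h' # r \<in> C m" unfolding C_def by auto
    then show ?thesis using cr Suc by force
  qed
next
  fix c assume "c \<in> (\<lambda>c. Suc (hd c) # tl c) ` C m \<union> (\<lambda>c. 0 # c) ` C m"
  then show "c \<in> C (Suc m)" unfolding C_def
    by (auto simp: neq_Nil_conv)
qed

lemma main_comp: "(xH + yH) ^ m * yH = (\<Sum>c\<in>C m. zprod c)"
proof (induction m)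
  case 0
  have "C 0 = {[0]}" unfolding C_def
    by (auto simp: neq_Nil_conv)
  then show ?case by (simp add: zprod_def y_z1)
next
  case (Suc m)
  have inj1: "inj_on (\<lambda>c. Suc (hd c) # tl c) (C m)"
    unfolding C_def inj_on_def by (auto simp: neq_Nil_conv)
  have inj2: "inj_on (\<lambda>c. 0 # (c::nat list)) (C m)"
    unfolding inj_on_def by auto
  have disj: "(\<lambda>c. Suc (hd c) # tl c) ` C m \<inter> (\<lambda>c. 0 # c) ` C m = {}"
    by auto
  have "(xH + yH) ^ Suc m * yH = xH * ((xH + yH) ^ m * yH) + yH * ((xH + yH) ^ m * yH)"
    by (simp add: mult.assoc distrib_right)
  also have "\<dots> = (\<Sum>c\<in>C m. xH * zprod c) + (\<Sum>c\<in>C m. yH * zprod c)"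
    by (simp add: Suc sum_distrib_left)
  also have "(\<Sum>c\<in>C m. xH * zprod c) = (\<Sum>c\<in>C m. zprod (Suc (hd c) # tl c))"
  proof (rule sum.cong)
    fix c assume "c \<in> C m"
    then obtain h r where "c = h # r" unfolding C_def by (cases c) auto
    then show "xH * zprod c = zprod (Suc (hd c) # tl c)"
      using x_zH[of h] by (simp add: zprod_cons mult.assoc[symmetric])
  qed simp
  also have "\<dots> = (\<Sum>c\<in>(\<lambda>c. Suc (hd c) # tl c) ` C m. zprod c)"
    by (simp add: sum.reindex[OF inj1] o_def)
  also have "(\<Sum>c\<in>C m. yH * zprod c) = (\<Sum>c\<in>C m. zprod (0 # c))"
    by (simp add: zprod_cons y_z1)
  also have "\<dots> = (\<Sum>c\<in>(\<lambda>c. 0 # c) ` C m. zprod c)"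
    by (simp add: sum.reindex[OF inj2] o_def)
  also have "(\<Sum>c\<in>(\<lambda>c. Suc (hd c) # tl c) ` C m. zprod c) + (\<Sum>c\<in>(\<lambda>c. 0 # c) ` C m. zprod c)
      = (\<Sum>c\<in>C (Suc m). zprod c)"
    unfolding C_Suc by (rule sum.union_disjoint[symmetric]) (auto simp: finite_C disj)
  finally show ?case .
qed

lemma hY_pow: "hword [LY] ^ n = hword (replicate n LY)"
  by (induction n) (simp_all add: hword_nil hword_mult)

lemma zH1_pow: "zH 1 ^ n = hword (replicate n LY)"
  using hY_pow by (simp add: zH_def)

lemma sigma_word_rep: "sigma_word (replicate k LX @ replicate n LY) = xH ^ k * (xH + yH) ^ n"
  by (simp add: sigma_word_def)

lemma lhs: "S (zH (k + 1) * zH 1 ^ n) = xH ^ k * ((xH + yH) ^ n * yH)"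
proof -
  have "zH (k + 1) * zH 1 ^ n = hword (replicate k LX @ replicate (Suc n) LY)"
    unfolding zH1_pow by (simp add: zH_def hword_mult)
  then have "S (zH (k + 1) * zH 1 ^ n) = S_word (replicate k LX @ replicate n LY @ [LY])"
    by (simp add: S_def lin_ext_hword replicate_append_same)
  also have "\<dots> = sigma_word (replicate k LX @ replicate n LY) * yH"
    unfolding S_word_def by (simp add: butlast_append)
  finally show ?thesis by (simp add: sigma_word_rep mult.assoc)
qed

theorem lemma2p2:
  fixes k n :: nat
  assumes "k \<ge> 1" and "n \<ge> 1"
  shows "S (zH (k + 1) * zH 1 ^ n) =
    (\<Sum>t = 1..n + 1. \<Sum>a \<in> {a :: nat list. length a = t \<and> sum_list a = n + 1 - t}.
        zH (last a + k + 1) * prod_list (map (\<lambda>ai. zH (ai + 1)) (butlast a)))"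
proof -
  define g where "g a = zH (last a + k + 1) * prod_list (map (\<lambda>ai. zH (ai + 1)) (butlast a))" for a
  define A where "A t = {a :: nat list. length a = t \<and> sum_list a = n + 1 - t}" for t
  have finA: "finite (A t)" if "t \<in> {1..n+1}" for t
  proof -
    have "A t \<subseteq> rotate1 ` C n"
    proof
      fix a assume a: "a \<in> A t"
      then have "a \<noteq> []" using that unfolding A_def by auto
      then have "a = rotate1 (last a # butlast a)" by simp
      moreover have "last a # butlast a \<in> C n"
        using a that \<open>a \<noteq> []\<close> unfolding A_def C_def
        by (cases a rule: rev_cases) auto
      ultimately show "a \<in> rotate1 ` C n" by blast
    qed
    then show ?thesis using finite_C finite_subset by blast
  qed
  have U: "(\<Union>t\<in>{1..n+1}. A t) = rotate1 ` C n"
  proof (intro equalityI subsetI)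
    fix a assume "a \<in> (\<Union>t\<in>{1..n+1}. A t)"
    then obtain t where t: "t \<in> {1..n+1}" "a \<in> A t" by blast
    then have "a \<noteq> []" unfolding A_def by auto
    then have "a = rotate1 (last a # butlast a)" by simp
    moreover have "last a # butlast a \<in> C n"
      using t \<open>a \<noteq> []\<close> unfolding A_def C_def
      by (cases a rule: rev_cases) auto
    ultimately show "a \<in> rotate1 ` C n" by blast
  next
    fix a assume "a \<in> rotate1 ` C n"
    then obtain c where c: "c \<in> C n" "a = rotate1 c" by blast
    then obtain h r where hr: "c = h # r" unfolding C_def by (cases c) auto
    then have "length a \<in> {1..n+1}" "a \<in> A (length a)"
      using c unfolding C_def A_def by auto
    then show "a \<in> (\<Union>t\<in>{1..n+1}. A t)" by blast
  qed
  have "(\<Sum>t = 1..n + 1. \<Sum>a \<in> A t. g a) = (\<Sum>a\<in>(\<Union>t\<in>{1..n+1}. A t). g a)"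
    by (rule sum.UNION_disjoint[symmetric]) (use finA[unfolded A_def] in \<open>auto simp: A_def\<close>)
  also have "\<dots> = (\<Sum>c\<in>C n. g (rotate1 c))"
    unfolding U using inj_on_subset[OF inj_rotate1, of "C n"] by (simp add: sum.reindex o_def)
  also have "\<dots> = (\<Sum>c\<in>C n. xH ^ k * zprod c)"
  proof (rule sum.cong)
    fix c assume "c \<in> C n"
    then obtain h r where "c = h # r" unfolding C_def by (cases c) auto
    then show "g (rotate1 c) = xH ^ k * zprod c"
      using xpow_zH[of k h] by (simp add: g_def zprod_cons zprod_def mult.assoc[symmetric])
  qed simp
  also have "\<dots> = xH ^ k * ((xH + yH) ^ n * yH)"
    by (simp add: main_comp sum_distrib_left)
  finally show ?thesis unfolding g_def A_def lhs by simp
qed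

end
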